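(* Let $k\ge 2$, $w=2^k-1$, $v=2^{k-1}$. Consider a rectangular region of cells $(c,r)$ with columns $c\in\{0,\dots,2v-1\}$ and rows $r\in\{-1,0,\dots,w\}$ (rows increase downward), all cells outside this region being unavailable. Row $-1$: the frog stands on $(0,-1)$ and all other cells of the row are blocked. Rows $0,\dots,w-1$: all cells empty. Row $w$: cells $(0,w)$ and $(2v-1,w)$ are empty, all others blocked. For $j\ge1$ let $\tilde U_j$ be the sequence of $2^j-1$ vertical jumps $(0,1)$ followed by one vertical jump $(0,2^j+2^{j-1}-1)$, and $\tilde U_j^R$ its reverse. Let $\tilde V'=\tilde U_{k-1},\dots,\tilde U_1$ and $\tilde V''=\tilde U_1^R,\dots,\tilde U_{k-1}^R$, and consider the jump sequence $$\tilde V=(0,v),\ \tilde V',\ (1,0),\ \tilde V'',\ (1,0),\ \tilde V',\ (1,0),\ \tilde V'',\ (1,0),\ \dots,\ (1,0),\ \tilde V',\ (1,0),\ \tilde V'',\ (0,v),\ (2v-1,0),$$ which contains $v$ blocks of the form $\tilde V',(1,0),\tilde V''$ separated by single jumps $(1,0)$. Then for every choice of pairwise distinct even rows $r_1,\dots,r_v\in\{0,2,\dots,w-1\}$ there is a valid execution of $\tilde V$ in which, for each $i=1,\dots,v$, the jump $(1,0)$ inside the $i$-th block is made within row $r_i$, and at the end all cells of rows $0,\dots,w-1$ and the cell $(2v-1,w)$ are visited and the frog stands on $(0,w)$.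
   Context: A frog on a grid performs a given sequence of jumps $(dx,dy)$; for each jump it chooses a sign $s\in\{-1,+1\}$ and moves from $(x,y)$ to $(x+s\,dx,\,y+s\,dy)$. An execution is valid if every landing cell is an available (non-blocked) cell of the region that has not been visited before (the starting cell counts as visited). *)

theory Defs
  imports Main
begin

(* Cells are pairs (c, r) :: int * int (column, row; rows increase downward).
   A jump (dx, dy) with sign s moves (x, y) to (x + s*dx, y + s*dy). *)

fun exec_path :: "int \<times> int \<Rightarrow> ((int \<times> int) \<times> int) list \<Rightarrow> (int \<times> int) list" where
  "exec_path p [] = [p]"
| "exec_path p (((dx, dy), s) # rest) = p # exec_path (fst p + s * dx, snd p + s * dy) rest"

definition positions :: "int \<times> int \<Rightarrow> (int \<times> int) list \<Rightarrow> int list \<Rightarrow> (int \<times> int) list" where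
  "positions start js ss = exec_path start (zip js ss)"

definition valid_exec :: "(int \<times> int) set \<Rightarrow> int \<times> int \<Rightarrow> (int \<times> int) list \<Rightarrow> int list \<Rightarrow> bool" where
  "valid_exec A start js ss \<longleftrightarrow>
     length ss = length js \<and> set ss \<subseteq> {-1, 1} \<and>
     set (tl (positions start js ss)) \<subseteq> A \<and> distinct (positions start js ss)"

definition region :: "nat \<Rightarrow> (int \<times> int) set" where
  "region k = (let v = (2::int)^(k-1); w = (2::int)^k - 1 in
     {(c, r). 0 \<le> c \<and> c \<le> 2*v - 1 \<and> -1 \<le> r \<and> r \<le> w})"

definition blocked :: "nat \<Rightarrow> (int \<times> int) set" where
  "blocked k = (let v = (2::int)^(k-1); w = (2::int)^k - 1 in
     {(c, r). (r = -1 \<and> c \<noteq> 0) \<or> (r = w \<and> c \<noteq> 0 \<and> c \<noteq> 2*v - 1)})"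

definition available :: "nat \<Rightarrow> (int \<times> int) set" where
  "available k = region k - blocked k"

definition Ut :: "nat \<Rightarrow> (int \<times> int) list" where
  "Ut j = replicate (2^j - 1) (0, 1) @ [(0, 2^j + 2^(j-1) - 1)]"

definition Vp :: "nat \<Rightarrow> (int \<times> int) list" where
  "Vp k = concat (map Ut (rev [1..<k]))"

definition Vpp :: "nat \<Rightarrow> (int \<times> int) list" where
  "Vpp k = concat (map (\<lambda>j. rev (Ut j)) [1..<k])"

definition block :: "nat \<Rightarrow> (int \<times> int) list" where
  "block k = Vp k @ [(1, 0)] @ Vpp k"

definition Vt :: "nat \<Rightarrow> (int \<times> int) list" where
  "Vt k = (let v = (2::nat)^(k-1) in
     [(0, int v)] @ block k @ concat (replicate (v - 1) ([(1, 0)] @ block k))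
     @ [(0, int v), (2 * int v - 1, 0)])"

(* index (0-based, in Vt k) of the jump (1,0) inside the i-th block, i = 1..v *)
definition mid_jump_index :: "nat \<Rightarrow> nat \<Rightarrow> nat" where
  "mid_jump_index k i = 1 + (i - 1) * (length (block k) + 1) + length (Vp k)"

end

theory Submission imports Defs begin

fun pos1 :: "int \<Rightarrow> int list \<Rightarrow> int list" where
  "pos1 y [] = [y]"
| "pos1 y (d # ds) = y # pos1 (y + d) ds"

definition ud :: "nat \<Rightarrow> int list" where
  "ud j = replicate (2^j - 1) 1 @ [2^j + 2^(j-1) - 1]"

definition vd :: "nat \<Rightarrow> int list" where
  "vd m = concat (map ud (rev [1..<m]))"

lemma pos1_ne[simp]: "pos1 y ds \<noteq> []"
  by (cases ds) auto

lemma last_pos1: "last (pos1 y ds) = y + sum_list ds"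
  by (induction ds arbitrary: y) auto

lemma length_pos1[simp]: "length (pos1 y ds) = Suc (length ds)"
  by (induction ds arbitrary: y) auto

lemma pos1_append: "pos1 y (xs @ ys) = butlast (pos1 y xs) @ pos1 (y + sum_list xs) ys"
  by (induction xs arbitrary: y) (auto simp: algebra_simps)

lemma pos1_rep: "pos1 c (replicate n s @ ds) = map (\<lambda>t. c + s * int t) [0..<n] @ pos1 (c + s * int n) ds"
proof (induction n arbitrary: ds)
  case 0 then show ?case by simp
next
  case (Suc n)
  have "replicate (Suc n) s @ ds = replicate n s @ (s # ds)"
    by (simp add: replicate_append_same[symmetric])
  then show ?case using Suc by (simp add: algebra_simps)
qed

lemma vd_Suc: "m \<ge> 1 \<Longrightarrow> vd (Suc m) = ud m @ vd m"
  unfolding vd_def by (simp add: upt_Suc_append)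

lemma len_ud: "length (ud j) = 2^j"
  unfolding ud_def by simp

lemma len_vd: "m \<ge> 1 \<Longrightarrow> length (vd m) = 2^m - 2"
proof (induction m rule: nat_induct_at_least)
  case base then show ?case by (simp add: vd_def)
next
  case (Suc m)
  have "(2::nat)^m \<ge> 2" using Suc(1) by (metis power_increasing power_one_right one_le_numeral)
  then show ?case using Suc by (simp add: vd_Suc len_ud)
qed

lemma set_up: "set (map (\<lambda>t. c + 1 * int t) [0..<n]) = {c..<c + int n}"
proof -
  have "x \<in> (\<lambda>t. c + int t) ` {0..<n}" if "c \<le> x" "x < c + int n" for x
    using that by (intro image_eqI[where x="nat (x - c)"]) auto
  then show ?thesis by auto
qed

lemma set_down: "set (map (\<lambda>t. c + (-1) * int t) [0..<n]) = {c - int n<..c}"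
proof -
  have "x \<in> (\<lambda>t. c - int t) ` {0..<n}" if "c - int n < x" "x \<le> c" for x
    using that by (intro image_eqI[where x="nat (c - x)"]) auto
  then show ?thesis by auto
qed

lemma dist_up: "s \<noteq> 0 \<Longrightarrow> distinct (map (\<lambda>t. c + s * int t) [0..<n])"
  by (auto simp: distinct_map inj_on_def)

lemma map2_app: "length xs = length us \<Longrightarrow> map2 f (xs @ ys) (us @ vs) = map2 f xs us @ map2 f ys vs"
  by simp

lemma col:
  assumes "m \<ge> 1"
  shows "\<forall>a r. even r \<and> 0 \<le> r \<and> r \<le> 2^m - 2 \<longrightarrow>
    (\<exists>ss. length ss = length (vd m) \<and> set ss \<subseteq> {-1,1} \<and>
      distinct (pos1 (a + 2^(m-1) - 1) (map2 (*) ss (vd m))) \<and>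
      set (pos1 (a + 2^(m-1) - 1) (map2 (*) ss (vd m))) = {a..a+2^m-2} \<and>
      last (pos1 (a + 2^(m-1) - 1) (map2 (*) ss (vd m))) = a + r)"
  using assms
proof (induction m rule: nat_induct_at_least)
  case base
  show ?case by (auto simp: vd_def)
next
  case (Suc m)
  show ?case
  proof (intro allI impI)
    fix a r :: int
    assume r: "even r \<and> 0 \<le> r \<and> r \<le> 2 ^ Suc m - 2"
    define n where "n = (2::nat)^m - 1"
    define J where "J = (2::int)^m + 2^(m-1) - 1"
    define c where "c = a + 2^m - 1"
    have pm: "(2::int)^m = 2 * 2^(m-1)" using Suc(1)
      by (metis Suc_diff_1 le_numeral_extra(2) less_one not_less power_Suc zero_less_one_class.zero_le_one order.trans linorder_not_le)
    have p1: "(2::int)^(m-1) \<ge> 1" by simp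
    have nint: "int n = 2^m - 1" unfolding n_def by (simp add: of_nat_diff)
    have ud: "ud m = replicate n 1 @ [J]" unfolding ud_def n_def J_def by simp
    have c': "a + 2 ^ (Suc m - 1) - 1 = c" by (simp add: c_def)
    have oddm: "odd ((2::int)^m - 1)" using Suc(1) by simp
    show "\<exists>ss. length ss = length (vd (Suc m)) \<and> set ss \<subseteq> {- 1, 1} \<and>
              distinct (pos1 (a + 2 ^ (Suc m - 1) - 1) (map2 (*) ss (vd (Suc m)))) \<and>
              set (pos1 (a + 2 ^ (Suc m - 1) - 1) (map2 (*) ss (vd (Suc m)))) = {a..a + 2 ^ Suc m - 2} \<and>
              last (pos1 (a + 2 ^ (Suc m - 1) - 1) (map2 (*) ss (vd (Suc m)))) = a + r"
    proof (cases "r \<le> 2^m - 2")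
      case True
      from Suc(2) r True obtain ss' where ss': "length ss' = length (vd m)" "set ss' \<subseteq> {-1,1}"
        "distinct (pos1 (a + 2^(m-1) - 1) (map2 (*) ss' (vd m)))"
        "set (pos1 (a + 2^(m-1) - 1) (map2 (*) ss' (vd m))) = {a..a+2^m-2}"
        "last (pos1 (a + 2^(m-1) - 1) (map2 (*) ss' (vd m))) = a + r" by blast
      define P where "P = pos1 (a + 2^(m-1) - 1) (map2 (*) ss' (vd m))"
      define ss where "ss = replicate n 1 @ [-1] @ ss'"
      have "map2 (*) ss (vd (Suc m)) = replicate n 1 @ [-J] @ map2 (*) ss' (vd m)"
        unfolding ss_def using Suc(1) ss'(1) by (simp add: vd_Suc ud zip_replicate)
      then have eq: "pos1 c (map2 (*) ss (vd (Suc m))) = map (\<lambda>t. c + 1 * int t) [0..<n] @ (c + int n) # P"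
        unfolding P_def using pm nint by (simp add: pos1_rep c_def J_def algebra_simps)
      show ?thesis
      proof (intro exI conjI)
        show "length ss = length (vd (Suc m))" using ss'(1) Suc(1) by (simp add: ss_def vd_Suc len_ud n_def)
        show "set ss \<subseteq> {-1,1}" using ss'(2) by (auto simp: ss_def)
        show "distinct (pos1 (a + 2 ^ (Suc m - 1) - 1) (map2 (*) ss (vd (Suc m))))"
          unfolding c' eq using ss'(3,4) P_def dist_up[of 1] set_up nint pm
          by (auto simp: c_def)
        show "set (pos1 (a + 2 ^ (Suc m - 1) - 1) (map2 (*) ss (vd (Suc m)))) = {a..a + 2 ^ Suc m - 2}"
          unfolding c' eq using ss'(4) P_def set_up nint pm
          by (auto simp: c_def)
        show "last (pos1 (a + 2 ^ (Suc m - 1) - 1) (map2 (*) ss (vd (Suc m)))) = a + r"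
          unfolding c' eq using ss'(5) P_def by simp
      qed
    next
      case False
      have "r \<noteq> 2^m - 1" using r oddm by auto
      then have r2: "r \<ge> 2^m" using False by linarith
      from Suc(2) r r2 have "even (r - 2^m) \<and> 0 \<le> r - 2^m \<and> r - 2^m \<le> 2^m - 2"
        using Suc(1) by (auto simp: pm)
      with Suc(2) obtain ss' where ss': "length ss' = length (vd m)" "set ss' \<subseteq> {-1,1}"
        "distinct (pos1 ((a + 2^m) + 2^(m-1) - 1) (map2 (*) ss' (vd m)))"
        "set (pos1 ((a + 2^m) + 2^(m-1) - 1) (map2 (*) ss' (vd m))) = {a + 2^m..(a + 2^m)+2^m-2}"
        "last (pos1 ((a + 2^m) + 2^(m-1) - 1) (map2 (*) ss' (vd m))) = (a + 2^m) + (r - 2^m)" by blast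
      define P where "P = pos1 ((a + 2^m) + 2^(m-1) - 1) (map2 (*) ss' (vd m))"
      define ss where "ss = replicate n (-1) @ [1] @ ss'"
      have "map2 (*) ss (vd (Suc m)) = replicate n (-1) @ [J] @ map2 (*) ss' (vd m)"
        unfolding ss_def using Suc(1) ss'(1) by (simp add: vd_Suc ud zip_replicate)
      then have eq: "pos1 c (map2 (*) ss (vd (Suc m))) = map (\<lambda>t. c + (-1) * int t) [0..<n] @ (c - int n) # P"
        unfolding P_def using pm nint by (simp add: pos1_rep c_def J_def algebra_simps)
      show ?thesis
      proof (intro exI conjI)
        show "length ss = length (vd (Suc m))" using ss'(1) Suc(1) by (simp add: ss_def vd_Suc len_ud n_def)
        show "set ss \<subseteq> {-1,1}" using ss'(2) by (auto simp: ss_def)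
        show "distinct (pos1 (a + 2 ^ (Suc m - 1) - 1) (map2 (*) ss (vd (Suc m))))"
          unfolding c' eq using ss'(3,4) P_def dist_up[of "-1"] set_down nint pm
          by (auto simp: c_def)
        show "set (pos1 (a + 2 ^ (Suc m - 1) - 1) (map2 (*) ss (vd (Suc m)))) = {a..a + 2 ^ Suc m - 2}"
          unfolding c' eq using ss'(4) P_def set_down nint pm
          by (auto simp: c_def)
        show "last (pos1 (a + 2 ^ (Suc m - 1) - 1) (map2 (*) ss (vd (Suc m)))) = a + r"
          unfolding c' eq using ss'(5) P_def by simp
      qed
    qed
  qed
qed


lemma hd_pos1: "hd (pos1 y ds) = y"
  by (cases ds) auto

lemma sum_neg: "sum_list (map uminus ds) = - sum_list (ds::int list)"
  by (induction ds) auto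

lemma pos1_rev: "pos1 (y + sum_list ds) (rev (map uminus ds)) = rev (pos1 y ds)"
proof (induction ds arbitrary: y)
  case Nil then show ?case by simp
next
  case (Cons d ds)
  have IH: "pos1 (y + d + sum_list ds) (rev (map uminus ds)) = rev (pos1 (y + d) ds)"
    using Cons by simp
  have "pos1 (y + sum_list (d # ds)) (rev (map uminus (d # ds)))
      = butlast (rev (pos1 (y + d) ds)) @ pos1 (y + d + sum_list ds + sum_list (rev (map uminus ds))) [-d]"
    using IH by (simp add: pos1_append algebra_simps)
  also have "\<dots> = butlast (rev (pos1 (y + d) ds)) @ [y + d, y]"
    by (simp add: sum_list_rev sum_neg)
  also have "\<dots> = rev (pos1 (y + d) ds) @ [y]"
  proof -
    have "rev (pos1 (y + d) ds) = butlast (rev (pos1 (y + d) ds)) @ [y + d]"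
      by (metis append_butlast_last_id hd_pos1 last_rev pos1_ne rev_is_Nil_conv)
    then show ?thesis by (metis append.assoc append_Cons append_Nil)
  qed
  finally show ?case by simp
qed

lemma exec_append: "exec_path p (A @ B) = butlast (exec_path p A) @ exec_path (last (exec_path p A)) B"
proof (induction A arbitrary: p)
  case Nil then show ?case by simp
next
  case (Cons a A)
  obtain dx dy s where a: "a = ((dx, dy), s)" by (metis prod.exhaust)
  have ne: "exec_path q A \<noteq> []" for q by (cases "(q, A)" rule: exec_path.cases) auto
  show ?case using Cons ne by (simp add: a)
qed

lemma exec_vert: "length ss = length ds \<Longrightarrow>
  exec_path (x, y) (zip (map (Pair 0) ds) ss) = map (Pair x) (pos1 y (map2 (*) ss ds))"
proof (induction ds arbitrary: ss y)
  case Nil then show ?case by simp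
next
  case (Cons d ds)
  then obtain s ss' where "ss = s # ss'" by (cases ss) auto
  then show ?case using Cons by (simp add: mult.commute)
qed

lemma exec_vert_app: "length ss = length ds \<Longrightarrow>
  exec_path (x, y) (zip (map (Pair 0) ds) ss @ rest) =
   map (Pair x) (butlast (pos1 y (map2 (*) ss ds))) @ exec_path (x, last (pos1 y (map2 (*) ss ds))) rest"
  by (simp add: exec_append exec_vert map_butlast last_map)

lemma Ut_map: "Ut j = map (Pair 0) (ud j)"
  unfolding Ut_def ud_def by simp

lemma Vp_map: "Vp k = map (Pair 0) (vd k)"
proof -
  have "map Ut xs = map (map (Pair 0) \<circ> ud) xs" for xs by (induction xs) (auto simp: Ut_map)
  then show ?thesis unfolding Vp_def vd_def map_concat by (simp only: map_map)
qed

lemma Vpp_rev: "Vpp k = rev (Vp k)"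
  unfolding Vpp_def Vp_def by (simp add: rev_concat rev_map comp_def)

lemma rep_swap: "concat (replicate n (B @ [x])) @ B = B @ concat (replicate n ([x] @ B))"
  by (induction n) auto

lemma nth_concat_eq:
  assumes "\<And>i. i < n \<Longrightarrow> length (f i) = M" "j < n" "t < M"
  shows "concat (map f [0..<n]) ! (j * M + t) = f j ! t"
  using assms
proof (induction n)
  case 0 then show ?case by simp
next
  case (Suc n)
  have "map (\<lambda>x. length (f x)) [0..<n] = replicate n M"
    by (rule nth_equalityI) (auto simp: Suc(2))
  then have len: "length (concat (map f [0..<n])) = n * M"
    by (simp add: length_concat comp_def sum_list_replicate)
  show ?case
  proof (cases "j < n")
    case True
    have "Suc j * M \<le> n * M" using True by (intro mult_le_mono1) simp
    then have "j * M + t < n * M" using Suc(4) by simp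
    then show ?thesis using Suc True len by (simp add: nth_append)
  next
    case False
    then have "j = n" using Suc by simp
    then show ?thesis using len by (simp add: nth_append)
  qed
qed

lemma mbl: "xs \<noteq> [] \<Longrightarrow> map f (butlast xs) @ f (last xs) # ys = map f xs @ ys"
  by (induction xs rule: rev_induct) auto

locale frog =
  fixes k :: nat and rr :: "nat \<Rightarrow> int" and F :: "int \<Rightarrow> int list"
  assumes k2: "k \<ge> 2"
  and rrg: "\<forall>i\<in>{1..2^(k-1)}. even (rr i) \<and> 0 \<le> rr i \<and> rr i \<le> 2^k - 2"
  and FP: "\<And>r. even r \<Longrightarrow> 0 \<le> r \<Longrightarrow> r \<le> 2^k - 2 \<Longrightarrow>
     length (F r) = length (vd k) \<and> set (F r) \<subseteq> {-1,1} \<and>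
     distinct (pos1 ((2::int)^(k-1) - 1) (map2 (*) (F r) (vd k))) \<and>
     set (pos1 ((2::int)^(k-1) - 1) (map2 (*) (F r) (vd k))) = {0..2^k-2} \<and>
     last (pos1 ((2::int)^(k-1) - 1) (map2 (*) (F r) (vd k))) = r"
begin

definition vn :: nat where "vn = 2^(k-1)"
definition vi :: int where "vi = 2^(k-1)"
definition Rc :: "nat \<Rightarrow> int" where "Rc i = rr (Suc i)"
definition Pc :: "int \<Rightarrow> int list" where "Pc r = pos1 (vi - 1) (map2 (*) (F r) (vd k))"
definition Gc :: "int \<Rightarrow> int list" where "Gc r = rev (map uminus (F r))"
definition zb :: "nat \<Rightarrow> ((int \<times> int) \<times> int) list" where
  "zb i = zip (Vp k) (F (Rc i)) @ [((1,0),1)] @ zip (Vpp k) (Gc (Rc i))"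
definition bp :: "nat \<Rightarrow> (int \<times> int) list" where
  "bp i = map (Pair (2 * int i)) (Pc (Rc i)) @ map (Pair (2 * int i + 1)) (rev (Pc (Rc i)))"

lemma vi_vn: "int vn = vi" unfolding vn_def vi_def by simp
lemma pow: "(2::int)^k = 2 * vi"
  unfolding vi_def using k2 by (cases k) auto
lemma vi2: "vi \<ge> 2"
proof -
  have "(2::int)^1 \<le> 2^(k-1)" using k2 by (intro power_increasing) auto
  then show ?thesis unfolding vi_def by simp
qed
lemma vn_pos: "vn \<ge> 1" unfolding vn_def by simp

lemma Rg: "i < vn \<Longrightarrow> even (Rc i) \<and> 0 \<le> Rc i \<and> Rc i \<le> 2^k - 2"
  using rrg unfolding Rc_def vn_def by auto

lemma lenvd: "length (vd k) = 2^k - 2" using k2 len_vd by simp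

lemma FPc: assumes "even r" "0 \<le> r" "r \<le> 2^k - 2"
  shows "length (F r) = length (vd k)" "set (F r) \<subseteq> {-1,1}" "distinct (Pc r)"
    "set (Pc r) = {0..2*vi-2}" "last (Pc r) = r"
  using FP[OF assms] unfolding Pc_def vi_def[symmetric] pow by auto

lemma lenP: "length (F r) = length (vd k) \<Longrightarrow> length (Pc r) = 2^k - 1"
proof -
  assume a: "length (F r) = length (vd k)"
  have "(2::nat)^1 \<le> 2^k" using k2 by (intro power_increasing) auto
  then show ?thesis unfolding Pc_def using a lenvd by simp
qed

lemma Prev: assumes "length (F r) = length (vd k)" "last (Pc r) = r"
  shows "pos1 r (map2 (*) (Gc r) (rev (vd k))) = rev (Pc r)"
proof -
  define D where "D = map2 (*) (F r) (vd k)"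
  have "map2 (*) (Gc r) (rev (vd k)) = rev (map uminus D)"
    unfolding Gc_def D_def using assms(1) by (simp add: zip_rev[symmetric] zip_map1 rev_map split_def)
  moreover have "r = vi - 1 + sum_list D" using assms(2) unfolding Pc_def D_def by (simp add: last_pos1)
  ultimately show ?thesis using pos1_rev[of "vi - 1" D] unfolding Pc_def D_def by simp
qed

lemma block_exec:
  assumes "i < vn"
  shows "exec_path (2 * int i, vi - 1) (zb i @ ((dx, dy), s) # rest) =
     bp i @ exec_path (2 * int i + 1 + s * dx, vi - 1 + s * dy) rest"
proof -
  define r where "r = Rc i"
  define Q where "Q = Pc r"
  have g: "even r" "0 \<le> r" "r \<le> 2^k - 2" using Rg[OF assms] r_def by auto
  note fp = FPc[OF g]
  have lG: "length (Gc r) = length (rev (vd k))" using fp(1) by (simp add: Gc_def)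
  have Qne: "Q \<noteq> []" unfolding Q_def Pc_def by simp
  have hQ: "hd Q = vi - 1" unfolding Q_def Pc_def by (simp add: hd_pos1)
  have lQ: "last Q = r" using fp(5) Q_def by simp
  have P1: "pos1 (vi - 1) (map2 (*) (F r) (vd k)) = Q" unfolding Q_def Pc_def ..
  have rq: "pos1 r (map2 (*) (Gc r) (rev (vd k))) = rev Q"
    unfolding Q_def using Prev[OF fp(1) fp(5)] .
  have eq: "zb i @ ((dx, dy), s) # rest = zip (map (Pair 0) (vd k)) (F r) @
     (((1,0),1) # (zip (map (Pair 0) (rev (vd k))) (Gc r) @ ((dx, dy), s) # rest))"
    unfolding zb_def r_def by (simp add: Vp_map Vpp_rev rev_map)
  have "exec_path (2 * int i, vi - 1) (zb i @ ((dx, dy), s) # rest) =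
     map (Pair (2 * int i)) (butlast Q) @ (2 * int i, last Q) #
     (map (Pair (2 * int i + 1)) (butlast (rev Q)) @ (2 * int i + 1, last (rev Q)) #
      exec_path (2 * int i + 1 + s * dx, vi - 1 + s * dy) rest)"
    unfolding eq using fp(1) lG
    by (simp only: exec_vert_app P1 lQ rq exec_path.simps fst_conv snd_conv, simp add: lQ hQ last_rev rq)
  also have "\<dots> = bp i @ exec_path (2 * int i + 1 + s * dx, vi - 1 + s * dy) rest"
    unfolding bp_def r_def[symmetric] Q_def[symmetric] using Qne
    using Qne by (simp only: mbl[OF Qne, of "Pair (2 * int i)"] mbl[of "rev Q" "Pair (2 * int i + 1)"] append_assoc rev_is_Nil_conv not_False_eq_True simp_thms)
  finally show ?thesis .
qed


definition zb' :: "nat \<Rightarrow> ((int \<times> int) \<times> int) list" where "zb' i = zb i @ [((1,0),1)]"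

lemma multi_exec:
  "n \<le> vn \<Longrightarrow> exec_path (0, vi - 1) (concat (map zb' [0..<n]) @ rest) =
     concat (map bp [0..<n]) @ exec_path (2 * int n, vi - 1) rest"
proof (induction n arbitrary: rest)
  case 0 then show ?case by simp
next
  case (Suc n)
  have e: "2 * int n + 1 + 1 * 1 = 2 * int (Suc n)" "vi - 1 + 1 * 0 = vi - 1" by simp_all
  have nv: "n < vn" "n \<le> vn" using Suc.prems by auto
  have s1: "concat (map zb' [0..<Suc n]) @ rest = concat (map zb' [0..<n]) @ (zb n @ ((1,0),1) # rest)"
    by (simp only: upt_Suc_append[OF le0] map_append concat_append list.map concat.simps append_Nil2 zb'_def append_assoc append_Cons append_Nil)
  have s3: "exec_path (2 * int n, vi - 1) (zb n @ ((1,0),1) # rest) = bp n @ exec_path (2 * int (Suc n), vi - 1) rest"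
    using block_exec[OF nv(1), of 1 0 1 rest] unfolding e .
  have s4: "concat (map bp [0..<Suc n]) = concat (map bp [0..<n]) @ bp n"
    by (simp only: upt_Suc_append[OF le0] map_append concat_append list.map concat.simps append_Nil2)
  show ?case
    unfolding s1 Suc.IH[OF nv(2)] s3 s4 by (simp only: append_assoc)
qed

definition Z :: "((int \<times> int) \<times> int) list" where
  "Z = ((0, vi), 1) # concat (map zb' [0..<vn - 1]) @ zb (vn - 1) @ [((0, vi), 1), ((2 * vi - 1, 0), -1)]"

lemma ps_eq: "exec_path (0, -1) Z = (0, -1) # concat (map bp [0..<vn]) @ [(2*vi - 1, 2*vi - 1), (0, 2*vi - 1)]"
proof -
  have v1: "vn = Suc (vn - 1)" using vn_pos by simp
  have iv: "int (vn - 1) = vi - 1" using vn_pos vi_vn by (simp add: of_nat_diff)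
  have "exec_path (0, -1) Z = (0, -1) # exec_path (0, vi - 1) (concat (map zb' [0..<vn - 1]) @ zb (vn - 1) @ [((0, vi), 1), ((2 * vi - 1, 0), -1)])"
    unfolding Z_def by simp
  also have "\<dots> = (0, -1) # concat (map bp [0..<vn - 1]) @ exec_path (2 * int (vn - 1), vi - 1) (zb (vn - 1) @ ((0, vi), 1) # [((2 * vi - 1, 0), -1)])"
    using multi_exec[of "vn - 1"] by simp
  also have "\<dots> = (0, -1) # concat (map bp [0..<vn - 1]) @ bp (vn - 1) @ exec_path (2 * int (vn - 1) + 1 + 1 * 0, vi - 1 + 1 * vi) [((2 * vi - 1, 0), -1)]"
    using block_exec[of "vn - 1"] vn_pos by simp
  also have "\<dots> = (0, -1) # concat (map bp [0..<vn]) @ [(2*vi - 1, 2*vi - 1), (0, 2*vi - 1)]"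
    using iv by (subst (3) v1) (simp add: algebra_simps)
  finally show ?thesis .
qed

lemma fst_zb: "i < vn \<Longrightarrow> map fst (zb i) = block k"
proof -
  assume "i < vn"
  note fp = FPc[OF conjunct1[OF Rg[OF \<open>i < vn\<close>]] conjunct1[OF conjunct2[OF Rg[OF \<open>i < vn\<close>]]] conjunct2[OF conjunct2[OF Rg[OF \<open>i < vn\<close>]]]]
  show ?thesis unfolding zb_def block_def using fp(1)
    by (simp add: Vp_map Vpp_rev Gc_def)
qed

lemma fst_Z: "map fst Z = Vt k"
proof -
  have "map fst (concat (map zb' [0..<vn - 1])) = concat (map (\<lambda>i. block k @ [(1,0)]) [0..<vn - 1])"
  proof -
    have "map (\<lambda>i. map fst (zb' i)) [0..<vn - 1] = map (\<lambda>i. block k @ [(1,0)]) [0..<vn - 1]"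
      by (rule map_cong) (auto simp: zb'_def fst_zb)
    then show ?thesis unfolding map_concat map_map comp_def by (rule arg_cong)
  qed
  also have "\<dots> = concat (replicate (vn - 1) (block k @ [(1,0)]))"
    by (simp add: map_replicate_const)
  finally have 1: "map fst (concat (map zb' [0..<vn - 1])) = concat (replicate (vn - 1) (block k @ [(1,0)]))" .
  have 2: "map fst (zb (vn - 1)) = block k" using fst_zb vn_pos by simp
  show ?thesis unfolding Z_def Vt_def Let_def vn_def[symmetric] vi_vn[symmetric]
    using 1 2 rep_swap[of "vn - 1" "block k" "(1,0)"] by simp
qed

lemma snd_zb: "i < vn \<Longrightarrow> set (map snd (zb i)) \<subseteq> {-1, 1}"
proof -
  assume "i < vn"
  note fp = FPc[OF conjunct1[OF Rg[OF \<open>i < vn\<close>]] conjunct1[OF conjunct2[OF Rg[OF \<open>i < vn\<close>]]] conjunct2[OF conjunct2[OF Rg[OF \<open>i < vn\<close>]]]]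
  show ?thesis unfolding zb_def using fp(1,2)
    by (auto simp: Vp_map Vpp_rev Gc_def)
qed

lemma snd_zb': "i < vn \<Longrightarrow> x \<in> set (zb i) \<Longrightarrow> snd x \<in> {-1,1}"
  using snd_zb by force

lemma snd_Z: "set (map snd Z) \<subseteq> {-1, 1}"
proof
  fix s assume "s \<in> set (map snd Z)"
  then obtain x where x: "x \<in> set Z" "s = snd x" by auto
  have "x = ((0, vi), 1) \<or> (\<exists>i < vn - 1. x \<in> set (zb' i)) \<or> x \<in> set (zb (vn - 1)) \<or> x = ((0, vi), 1) \<or> x = ((2 * vi - 1, 0), -1)"
    using x(1) unfolding Z_def by auto
  moreover have "snd x \<in> {-1,1}" if "i < vn - 1" "x \<in> set (zb' i)" for i
    using that snd_zb'[of i x] unfolding zb'_def by auto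
  moreover have "vn - 1 < vn" using vn_pos by simp
  ultimately show "s \<in> {-1,1}" using x(2) snd_zb'[of "vn - 1" x] by auto
qed


lemma FPi: "i < vn \<Longrightarrow> length (F (Rc i)) = length (vd k) \<and> set (F (Rc i)) \<subseteq> {-1,1} \<and>
   distinct (Pc (Rc i)) \<and> set (Pc (Rc i)) = {0..2*vi-2} \<and> last (Pc (Rc i)) = Rc i"
  using Rg[of i] FPc[of "Rc i"] by blast

lemma set_bp: "i < vn \<Longrightarrow> set (bp i) = {(c, y). (c = 2 * int i \<or> c = 2 * int i + 1) \<and> 0 \<le> y \<and> y \<le> 2*vi-2}"
  unfolding bp_def using FPi[of i] by auto

lemma dist_bp: "i < vn \<Longrightarrow> distinct (bp i)"
  unfolding bp_def using FPi[of i] by (auto simp: distinct_map inj_on_def)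

lemma Cs: "concat (map bp [0..<Suc n]) = concat (map bp [0..<n]) @ bp n"
  by (simp only: upt_Suc_append[OF le0] map_append concat_append list.map concat.simps append_Nil2)

lemma dist_C: "n \<le> vn \<Longrightarrow> distinct (concat (map bp [0..<n])) \<and> (\<forall>p \<in> set (concat (map bp [0..<n])). fst p < 2 * int n)"
proof (induction n)
  case 0 then show ?case by simp
next
  case (Suc n)
  have nv: "n < vn" "n \<le> vn" using Suc.prems by auto
  have IH: "distinct (concat (map bp [0..<n]))" "\<forall>p \<in> set (concat (map bp [0..<n])). fst p < 2 * int n"
    using Suc.IH[OF nv(2)] by auto
  have sb: "set (bp n) = {(c, y). (c = 2 * int n \<or> c = 2 * int n + 1) \<and> 0 \<le> y \<and> y \<le> 2*vi-2}"
    using set_bp[OF nv(1)] .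
  have "set (concat (map bp [0..<n])) \<inter> set (bp n) = {}"
    using IH(2) sb by fastforce
  then have "distinct (concat (map bp [0..<n]) @ bp n)"
    using IH(1) dist_bp[OF nv(1)] by simp
  moreover have "\<forall>p \<in> set (concat (map bp [0..<n]) @ bp n). fst p < 2 * int (Suc n)"
    using IH(2) sb by fastforce
  ultimately show ?case unfolding Cs by blast
qed

lemma set_C: "set (concat (map bp [0..<vn])) = {(c, y). 0 \<le> c \<and> c \<le> 2 * vi - 1 \<and> 0 \<le> y \<and> y \<le> 2 * vi - 2}"
proof (intro equalityI subsetI)
  fix x assume "x \<in> set (concat (map bp [0..<vn]))"
  then obtain i where i0: "i \<in> set [0..<vn]" "x \<in> set (bp i)"
    unfolding set_concat set_map by blast
  then have i: "i < vn" "x \<in> set (bp i)" by simp_all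
  have "int i < int vn" using i(1) by simp
  then have iv: "int i \<le> vi - 1" using vi_vn by simp
  obtain c y where xy: "x = (c, y)" and cy: "c = 2 * int i \<or> c = 2 * int i + 1" "0 \<le> y" "y \<le> 2*vi-2"
    using i(2) unfolding set_bp[OF i(1)] by blast
  have "0 \<le> c" "c \<le> 2 * vi - 1" using cy(1) iv by auto
  then show "x \<in> {(c, y). 0 \<le> c \<and> c \<le> 2 * vi - 1 \<and> 0 \<le> y \<and> y \<le> 2 * vi - 2}"
    using xy cy by blast
next
  fix x assume x: "x \<in> {(c, y). 0 \<le> c \<and> c \<le> 2 * vi - 1 \<and> 0 \<le> y \<and> y \<le> 2 * vi - 2}"
  obtain c y where xy: "x = (c, y)" and cy: "0 \<le> c" "c \<le> 2 * vi - 1" "0 \<le> y" "y \<le> 2 * vi - 2"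
    using x by blast
  define i where "i = nat (c div 2)"
  have d0: "0 \<le> c div 2" using cy(1) by presburger
  have ci: "int i = c div 2" unfolding i_def using d0 by simp
  have "c div 2 < vi" using cy(2) by presburger
  then have iv: "i < vn" using ci vi_vn by linarith
  have "c = 2 * int i \<or> c = 2 * int i + 1" unfolding ci by presburger
  then have "x \<in> set (bp i)" unfolding set_bp[OF iv] xy using cy by blast
  then show "x \<in> set (concat (map bp [0..<vn]))" using iv by auto
qed

lemma len_C: "n \<le> vn \<Longrightarrow> length (concat (map bp [0..<n])) = n * (2 * (2^k - 1))"
proof (induction n)
  case 0 then show ?case by simp
next
  case (Suc n)
  then have "length (bp n) = 2 * (2^k - 1)" using FPi[of n] lenP by (simp add: bp_def)
  then show ?case using Suc unfolding Cs by simp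
qed

lemma main_loc:
  "\<exists>ss. valid_exec (available k) (0, -1) (Vt k) ss \<and>
    (let ps = positions (0, -1) (Vt k) ss; v = (2::int)^(k-1); w = (2::int)^k - 1 in
      (\<forall>i \<in> {1..2^(k-1)}.
         snd (ps ! mid_jump_index k i) = rr i \<and> snd (ps ! Suc (mid_jump_index k i)) = rr i) \<and>
      (\<forall>c r. 0 \<le> c \<and> c \<le> 2*v - 1 \<and> 0 \<le> r \<and> r \<le> w - 1 \<longrightarrow> (c, r) \<in> set ps) \<and>
      (2*v - 1, w) \<in> set ps \<and>
      last ps = (0, w))"
proof (intro exI conjI)
  define C where "C = concat (map bp [0..<vn])"
  have pos: "positions (0, -1) (Vt k) (map snd Z) = (0, -1) # C @ [(2*vi - 1, 2*vi - 1), (0, 2*vi - 1)]"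
    unfolding positions_def fst_Z[symmetric] zip_map_fst_snd ps_eq C_def ..
  have vv: "(2::int)^(k-1) = vi" "(2::int)^k - 1 = 2 * vi - 1" "(2::int)^k = 2 * vi" using pow by (simp_all add: vi_def)
  have vn': "(2::nat)^(k-1) = vn" by (simp add: vn_def)
  have sC: "set C = {(c, y). 0 \<le> c \<and> c \<le> 2 * vi - 1 \<and> 0 \<le> y \<and> y \<le> 2 * vi - 2}"
    unfolding C_def using set_C .
  have dC: "distinct C" unfolding C_def using dist_C[of vn] by simp
  show "valid_exec (available k) (0, -1) (Vt k) (map snd Z)"
    unfolding valid_exec_def
  proof (intro conjI)
    show "length (map snd Z) = length (Vt k)" by (simp flip: fst_Z)
    show "set (map snd Z) \<subseteq> {-1, 1}" by (rule snd_Z)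
    show "set (tl (positions (0, -1) (Vt k) (map snd Z))) \<subseteq> available k"
      unfolding pos available_def region_def blocked_def Let_def vv using sC vi2 by auto
    show "distinct (positions (0, -1) (Vt k) (map snd Z))"
      unfolding pos using sC dC vi2 by auto
  qed
  define L where "L = (2::nat)^k - 1"
  have k1: "(2::nat)^1 \<le> 2^k" using k2 by (intro power_increasing) auto
  have lb: "length (block k) + 1 = 2 * L" unfolding L_def block_def using lenvd k1
    by (simp add: Vpp_rev Vp_map)
  have lv: "length (Vp k) = L - 1" unfolding L_def using lenvd by (simp add: Vp_map)
  have L1: "L \<ge> 1" unfolding L_def using k1 by simp
  have lenC: "length C = vn * (2 * L)" unfolding C_def L_def using len_C by simp
  have lbp: "\<And>j. j < vn \<Longrightarrow> length (bp j) = 2 * L" using FPi lenP by (simp add: bp_def L_def)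
  have lP: "\<And>j. j < vn \<Longrightarrow> length (Pc (Rc j)) = L" using FPi lenP by (simp add: L_def)
  show "let ps = positions (0, -1) (Vt k) (map snd Z); v = (2::int)^(k-1); w = (2::int)^k - 1 in
      (\<forall>i \<in> {1..2^(k-1)}.
         snd (ps ! mid_jump_index k i) = rr i \<and> snd (ps ! Suc (mid_jump_index k i)) = rr i) \<and>
      (\<forall>c r. 0 \<le> c \<and> c \<le> 2*v - 1 \<and> 0 \<le> r \<and> r \<le> w - 1 \<longrightarrow> (c, r) \<in> set ps) \<and>
      (2*v - 1, w) \<in> set ps \<and>
      last ps = (0, w)"
    unfolding Let_def vv vn' pos
  proof (intro conjI ballI allI impI)
    fix i assume i: "i \<in> {1..vn}"
    define j where "j = i - 1"
    have jv: "j < vn" and ij: "i = Suc j" using i unfolding j_def by auto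
    have mj: "mid_jump_index k i = Suc (j * (2 * L) + (L - 1))"
      unfolding mid_jump_index_def lb lv j_def by simp
    have lt1: "j * (2 * L) + (L - 1) < length C" and lt2: "j * (2 * L) + L < length C"
    proof -
      have "Suc j * (2 * L) \<le> vn * (2 * L)" using jv by (intro mult_le_mono1) simp
      then show "j * (2 * L) + (L - 1) < length C" "j * (2 * L) + L < length C"
        using lenC L1 by auto
    qed
    have c1: "C ! (j * (2 * L) + (L - 1)) = bp j ! (L - 1)"
      unfolding C_def using nth_concat_eq[of vn bp "2 * L" j "L - 1"] lbp jv L1 by simp
    have c2: "C ! (j * (2 * L) + L) = bp j ! L"
      unfolding C_def using nth_concat_eq[of vn bp "2 * L" j L] lbp jv L1 by simp
    have b1: "bp j ! (L - 1) = (2 * int j, last (Pc (Rc j)))"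
    proof -
      have "Pc (Rc j) \<noteq> []" using lP[OF jv] L1 by auto
      then show ?thesis unfolding bp_def using lP[OF jv] L1 by (simp add: nth_append last_conv_nth)
    qed
    have b2: "bp j ! L = (2 * int j + 1, last (Pc (Rc j)))"
    proof -
      have "Pc (Rc j) \<noteq> []" using lP[OF jv] L1 by auto
      then show ?thesis unfolding bp_def using lP[OF jv] L1 by (simp add: nth_append last_conv_nth rev_nth)
    qed
    have lastR: "last (Pc (Rc j)) = rr i" using FPi[OF jv] unfolding Rc_def ij by simp
    show "snd (((0, -1) # C @ [(2 * vi - 1, 2 * vi - 1), (0, 2 * vi - 1)]) ! mid_jump_index k i) = rr i"
      unfolding mj using lt1 c1 b1 lastR by (simp add: nth_append)
    show "snd (((0, -1) # C @ [(2 * vi - 1, 2 * vi - 1), (0, 2 * vi - 1)]) ! Suc (mid_jump_index k i)) = rr i"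
      unfolding mj using lt2 c2 b2 lastR L1 by (simp add: nth_append)
  next
    fix c r :: int
    assume "0 \<le> c \<and> c \<le> 2 * vi - 1 \<and> 0 \<le> r \<and> r \<le> 2 * vi - 1 - 1"
    then show "(c, r) \<in> set ((0, -1) # C @ [(2 * vi - 1, 2 * vi - 1), (0, 2 * vi - 1)])"
      using sC by auto
  qed auto
qed

end

theorem mainTheorem10:
  fixes k :: nat and rr :: "nat \<Rightarrow> int"
  assumes "k \<ge> 2"
    and "inj_on rr {1..2^(k-1)}"
    and "\<forall>i \<in> {1..2^(k-1)}. even (rr i) \<and> 0 \<le> rr i \<and> rr i \<le> 2^k - 2"
  shows "\<exists>ss. valid_exec (available k) (0, -1) (Vt k) ss \<and>
    (let ps = positions (0, -1) (Vt k) ss; v = (2::int)^(k-1); w = (2::int)^k - 1 in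
      (\<forall>i \<in> {1..2^(k-1)}.
         snd (ps ! mid_jump_index k i) = rr i \<and> snd (ps ! Suc (mid_jump_index k i)) = rr i) \<and>
      (\<forall>c r. 0 \<le> c \<and> c \<le> 2*v - 1 \<and> 0 \<le> r \<and> r \<le> w - 1 \<longrightarrow> (c, r) \<in> set ps) \<and>
      (2*v - 1, w) \<in> set ps \<and>
      last ps = (0, w))"
proof -
  have k1: "k \<ge> 1" using assms(1) by simp
  have "\<forall>r. \<exists>ss. even r \<and> 0 \<le> r \<and> r \<le> 2^k - 2 \<longrightarrow>
     length ss = length (vd k) \<and> set ss \<subseteq> {-1,1} \<and>
     distinct (pos1 ((2::int)^(k-1) - 1) (map2 (*) ss (vd k))) \<and>
     set (pos1 ((2::int)^(k-1) - 1) (map2 (*) ss (vd k))) = {0..2^k-2} \<and>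
     last (pos1 ((2::int)^(k-1) - 1) (map2 (*) ss (vd k))) = r"
  proof
    fix r :: int
    show "\<exists>ss. even r \<and> 0 \<le> r \<and> r \<le> 2^k - 2 \<longrightarrow>
     length ss = length (vd k) \<and> set ss \<subseteq> {-1,1} \<and>
     distinct (pos1 ((2::int)^(k-1) - 1) (map2 (*) ss (vd k))) \<and>
     set (pos1 ((2::int)^(k-1) - 1) (map2 (*) ss (vd k))) = {0..2^k-2} \<and>
     last (pos1 ((2::int)^(k-1) - 1) (map2 (*) ss (vd k))) = r"
      using spec[OF col[OF k1], of 0] by auto
  qed
  then obtain F where F: "\<forall>r. even r \<and> 0 \<le> r \<and> r \<le> 2^k - 2 \<longrightarrow>
     length (F r) = length (vd k) \<and> set (F r) \<subseteq> {-1,1} \<and>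
     distinct (pos1 ((2::int)^(k-1) - 1) (map2 (*) (F r) (vd k))) \<and>
     set (pos1 ((2::int)^(k-1) - 1) (map2 (*) (F r) (vd k))) = {0..2^k-2} \<and>
     last (pos1 ((2::int)^(k-1) - 1) (map2 (*) (F r) (vd k))) = r"
    by (metis choice)
  interpret frog k rr F
    using assms(1,3) F by unfold_locales auto
  show ?thesis by (rule main_loc)
qed

end
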